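(* Under the full-support assumption, the constant $C_{\bm P}$ is strictly positive; more precisely, there is a constant $c>0$ depending only on $\bm P$ such that $\|\bm P{\bm\pi}\|_\infty\ge c\,\|{\bm\pi}-p({\bm\pi})\|_1$ for every ${\bm\pi}\in\Delta(\mathbb{A})$ with all entries positive.
   Context: $\mathbb{A}$ is a finite set, $\Delta(\mathbb{A})$ the probability simplex, $\bm P\in\mathbb{R}^{\mathbb{A}\times\mathbb{A}}$ skew-symmetric. $\mathbb{M}$ is the set of Nash equilibria: ${\bm\pi}\in\Delta(\mathbb{A})$ with $\max_a(\bm P{\bm\pi})_a\le 0$. Full-support assumption: for every $a$ there exists ${\bm\pi}\in\mathbb{M}$ with $\pi_a>0$. For ${\bm\pi}$ with positive entries, $p({\bm\pi})=\arg\min_{{\bm\pi}'\in\mathbb{M}}D_{\mathrm{KL}}({\bm\pi}'\|{\bm\pi})$ (unique). $C_{\bm P}=\inf\{\|\bm P{\bm\pi}\|_\infty/\|{\bm\pi}-p({\bm\pi})\|_1:\ {\bm\pi}\in\Delta(\mathbb{A})\setminus\mathbb{M},\ \pi_a>0\ \forall a\}$. *)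

theory Defs
  imports "HOL-Analysis.Analysis"
begin

definition prob_simplex :: "('a::finite \<Rightarrow> real) set" where
  "prob_simplex = {x. (\<forall>a. 0 \<le> x a) \<and> (\<Sum>a\<in>UNIV. x a) = 1}"

definition skew_symmetric :: "('a \<Rightarrow> 'a \<Rightarrow> real) \<Rightarrow> bool" where
  "skew_symmetric P \<longleftrightarrow> (\<forall>a b. P a b = - P b a)"

definition mat_vec :: "('a \<Rightarrow> 'a::finite \<Rightarrow> real) \<Rightarrow> ('a \<Rightarrow> real) \<Rightarrow> ('a \<Rightarrow> real)" where
  "mat_vec P x = (\<lambda>a. \<Sum>b\<in>UNIV. P a b * x b)"

definition norm_inf :: "('a::finite \<Rightarrow> real) \<Rightarrow> real" where
  "norm_inf v = Max (range (\<lambda>a. \<bar>v a\<bar>))"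

definition norm_one :: "('a::finite \<Rightarrow> real) \<Rightarrow> real" where
  "norm_one v = (\<Sum>a\<in>UNIV. \<bar>v a\<bar>)"

definition nash_set :: "('a \<Rightarrow> 'a::finite \<Rightarrow> real) \<Rightarrow> ('a \<Rightarrow> real) set" where
  "nash_set P = {x \<in> prob_simplex. Max (range (mat_vec P x)) \<le> 0}"

definition KL :: "('a::finite \<Rightarrow> real) \<Rightarrow> ('a \<Rightarrow> real) \<Rightarrow> real" where
  "KL x' x = (\<Sum>a\<in>UNIV. if x' a = 0 then 0 else x' a * ln (x' a / x a))"

text \<open>KL projection onto the Nash set (the unique minimiser).\<close>
definition kl_proj :: "('a \<Rightarrow> 'a::finite \<Rightarrow> real) \<Rightarrow> ('a \<Rightarrow> real) \<Rightarrow> ('a \<Rightarrow> real)" where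
  "kl_proj P x = (THE \<mu>. \<mu> \<in> nash_set P \<and> (\<forall>\<nu>\<in>nash_set P. KL \<mu> x \<le> KL \<nu> x))"

definition full_support :: "('a \<Rightarrow> 'a::finite \<Rightarrow> real) \<Rightarrow> bool" where
  "full_support P \<longleftrightarrow> (\<forall>a. \<exists>x\<in>nash_set P. x a > 0)"

definition C_const :: "('a \<Rightarrow> 'a::finite \<Rightarrow> real) \<Rightarrow> real" where
  "C_const P = Inf {norm_inf (mat_vec P x) / norm_one (\<lambda>a. x a - kl_proj P x a) | x.
      x \<in> prob_simplex - nash_set P \<and> (\<forall>a. x a > 0)}"

end

theory Submission
  imports Defs "HOL-Real_Asymp.Real_Asymp"
begin

lemma ln_strict: "0 < (u::real) \<Longrightarrow> u \<noteq> 1 \<Longrightarrow> ln u < u - 1"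
  using ln_le_minus_one ln_eq_minus_one by force

lemma mv_diff: "mat_vec P (\<lambda>b. x b - y b) a = mat_vec P x a - mat_vec P y a"
  by (simp add: mat_vec_def sum_subtractf algebra_simps)
lemma mv_add: "mat_vec P (\<lambda>b. x b + y b) a = mat_vec P x a + mat_vec P y a"
  by (simp add: mat_vec_def sum.distrib algebra_simps)
lemma mv_scale: "mat_vec P (\<lambda>b. u * x b) a = u * mat_vec P x a"
  by (simp add: mat_vec_def sum_distrib_left algebra_simps)
lemma mv_div: "mat_vec P (\<lambda>b. x b / u) a = mat_vec P x a / u"
  by (simp add: mat_vec_def sum_divide_distrib algebra_simps)

lemma skew_bil:
  assumes "skew_symmetric P"
  shows "(\<Sum>b\<in>UNIV. y b * mat_vec P z b) = - (\<Sum>b\<in>UNIV. z b * mat_vec P y b)"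
proof -
  have "(\<Sum>b\<in>UNIV. y b * mat_vec P z b) = (\<Sum>b\<in>UNIV. \<Sum>c\<in>UNIV. y b * P b c * z c)"
    by (simp add: mat_vec_def sum_distrib_left mult.assoc)
  also have "\<dots> = (\<Sum>c\<in>UNIV. \<Sum>b\<in>UNIV. y b * P b c * z c)" by (rule sum.swap)
  also have "\<dots> = (\<Sum>c\<in>UNIV. \<Sum>b\<in>UNIV. - (z c * P c b * y b))"
  proof (intro sum.cong refl)
    fix c b
    have h: "P b c = - P c b" using assms unfolding skew_symmetric_def by blast
    show "y b * P b c * z c = - (z c * P c b * y b)" by (simp add: h)
  qed
  also have "\<dots> = - (\<Sum>b\<in>UNIV. z b * mat_vec P y b)"
    by (simp add: mat_vec_def sum_distrib_left mult.assoc sum_negf)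
  finally show ?thesis .
qed

lemma no_nonneg: "0 \<le> norm_one v" by (simp add: norm_one_def sum_nonneg)
lemma no_add: "norm_one (\<lambda>b. f b + g b) \<le> norm_one f + norm_one g"
  unfolding norm_one_def by (simp add: sum.distrib[symmetric] sum_mono abs_triangle_ineq)
lemma no_diff: "norm_one (\<lambda>b. f b - g b) \<le> norm_one f + norm_one g"
  unfolding norm_one_def by (simp add: sum.distrib[symmetric] sum_mono abs_triangle_ineq4)
lemma no_scale: "norm_one (\<lambda>b. k * f b) = \<bar>k\<bar> * norm_one f"
  unfolding norm_one_def by (simp add: abs_mult sum_distrib_left)
lemma comp_le_no: "\<bar>f a\<bar> \<le> norm_one (f::'a::finite \<Rightarrow> real)"
  unfolding norm_one_def by (rule member_le_sum) auto
lemma comp_le_ni: "\<bar>v a\<bar> \<le> norm_inf (v::'a::finite \<Rightarrow> real)"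
  unfolding norm_inf_def by (rule Max_ge) auto
lemma ni_nonneg: "0 \<le> norm_inf (v::'a::finite \<Rightarrow> real)"
  using comp_le_ni[of v undefined] by linarith
lemma no_le_ni: "norm_one (v::'a::finite \<Rightarrow> real) \<le> real CARD('a) * norm_inf v"
  unfolding norm_one_def using sum_mono[of UNIV "\<lambda>a. \<bar>v a\<bar>" "\<lambda>_. norm_inf v"] comp_le_ni
  by auto

lemma fs_witness:
  assumes "full_support (P::'a::finite \<Rightarrow> 'a \<Rightarrow> real)"
  shows "\<exists>\<pi>\<in>nash_set P. \<forall>a. \<pi> a > 0"
proof -
  from assms obtain w where w: "\<And>a. w a \<in> nash_set P" "\<And>a. w a a > 0"
    unfolding full_support_def by metis
  define n where "n = real CARD('a)"
  have n: "n > 0" unfolding n_def by simp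
  define \<pi> where "\<pi> = (\<lambda>b. (\<Sum>a\<in>UNIV. w a b) / n)"
  have wn: "\<And>a b. 0 \<le> w a b" "\<And>a. (\<Sum>b\<in>UNIV. w a b) = 1"
    using w(1) by (auto simp: nash_set_def prob_simplex_def)
  have wP: "mat_vec P (w a) b \<le> 0" for a b
  proof -
    have "mat_vec P (w a) b \<le> Max (range (mat_vec P (w a)))" by (rule Max_ge) auto
    also have "\<dots> \<le> 0" using w(1)[of a] by (simp add: nash_set_def)
    finally show ?thesis .
  qed
  have pos: "\<pi> b > 0" for b
  proof -
    have "w b b \<le> (\<Sum>a\<in>UNIV. w a b)" by (rule member_le_sum) (auto simp: wn)
    then show ?thesis using w(2)[of b] n unfolding \<pi>_def by simp
  qed
  have sum1: "(\<Sum>b\<in>UNIV. \<pi> b) = 1"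
  proof -
    have "(\<Sum>b\<in>UNIV. \<pi> b) = (\<Sum>b\<in>UNIV. \<Sum>a\<in>UNIV. w a b) / n"
      unfolding \<pi>_def by (simp add: sum_divide_distrib)
    also have "(\<Sum>b\<in>UNIV. \<Sum>a\<in>UNIV. w a b) = (\<Sum>a\<in>UNIV. \<Sum>b\<in>UNIV. w a b)"
      by (rule sum.swap)
    also have "\<dots> = n" by (simp add: wn n_def)
    finally show ?thesis using n by simp
  qed
  have mv: "mat_vec P \<pi> b = (\<Sum>a\<in>UNIV. mat_vec P (w a) b) / n" for b
  proof -
    have "mat_vec P \<pi> b = (\<Sum>c\<in>UNIV. \<Sum>a\<in>UNIV. P b c * w a c) / n"
      unfolding \<pi>_def mat_vec_def by (simp add: sum_divide_distrib sum_distrib_left)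
    also have "(\<Sum>c\<in>UNIV. \<Sum>a\<in>UNIV. P b c * w a c) = (\<Sum>a\<in>UNIV. \<Sum>c\<in>UNIV. P b c * w a c)"
      by (rule sum.swap)
    finally show ?thesis by (simp add: mat_vec_def)
  qed
  have "mat_vec P \<pi> b \<le> 0" for b
    unfolding mv using n wP by (simp add: divide_nonpos_pos sum_nonpos)
  then have "Max (range (mat_vec P \<pi>)) \<le> 0" by (subst Max_le_iff) auto
  moreover have "\<pi> \<in> prob_simplex" unfolding prob_simplex_def using pos sum1 by (auto intro: less_imp_le)
  ultimately show ?thesis using pos unfolding nash_set_def by blast
qed

lemma nash_char:
  assumes sk: "skew_symmetric (P::'a::finite \<Rightarrow> 'a \<Rightarrow> real)" and fs: "full_support P"
  shows "nash_set P = {x \<in> prob_simplex. \<forall>b. mat_vec P x b = 0}"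
proof -
  obtain \<pi> where pn: "\<pi> \<in> nash_set P" and pp: "\<And>a. \<pi> a > 0" using fs_witness[OF fs] by blast
  have le: "mat_vec P x b \<le> 0" if "x \<in> nash_set P" for x b
  proof -
    have "mat_vec P x b \<le> Max (range (mat_vec P x))" by (rule Max_ge) auto
    also have "\<dots> \<le> 0" using that by (simp add: nash_set_def)
    finally show ?thesis .
  qed
  have zero: "(\<forall>b. f b = 0)" if "\<And>b. f b \<le> 0" "(\<Sum>b\<in>UNIV. \<pi> b * f b) = 0" for f :: "'a \<Rightarrow> real"
  proof -
    have "(\<Sum>b\<in>UNIV. - (\<pi> b * f b)) = 0" using that(2) by (simp add: sum_negf)
    moreover have "\<forall>b\<in>UNIV. 0 \<le> - (\<pi> b * f b)" using that(1) pp
      by (simp add: mult_nonneg_nonpos less_imp_le)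
    ultimately have "\<forall>b\<in>UNIV. - (\<pi> b * f b) = 0" using sum_nonneg_eq_0_iff[of UNIV "\<lambda>b. - (\<pi> b * f b)"] by simp
    then show ?thesis using pp by (metis UNIV_I neg_equal_0_iff_equal mult_eq_0_iff less_irrefl)
  qed
  have "(\<Sum>b\<in>UNIV. \<pi> b * mat_vec P \<pi> b) = 0" using skew_bil[OF sk, of \<pi> \<pi>] by linarith
  then have P0: "\<forall>b. mat_vec P \<pi> b = 0" using zero[of "mat_vec P \<pi>"] le[OF pn] by blast
  show ?thesis
  proof (intro set_eqI iffI)
    fix x assume x: "x \<in> nash_set P"
    have "(\<Sum>b\<in>UNIV. \<pi> b * mat_vec P x b) = 0" using skew_bil[OF sk, of \<pi> x] P0 by simp
    then have "\<forall>b. mat_vec P x b = 0" using zero[of "mat_vec P x"] le[OF x] by blast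
    then show "x \<in> {x \<in> prob_simplex. \<forall>b. mat_vec P x b = 0}" using x by (simp add: nash_set_def)
  next
    fix x assume x: "x \<in> {x \<in> prob_simplex. \<forall>b. mat_vec P x b = 0}"
    have "range (mat_vec P x) = {0}" using x by auto
    then have "Max (range (mat_vec P x)) \<le> 0" by simp
    then show "x \<in> nash_set P" using x by (simp add: nash_set_def)
  qed
qed

definition phi :: "real \<Rightarrow> real \<Rightarrow> real" where
  "phi X t = (if t = 0 then 0 else t * ln (t / X))"

lemma KL_phi: "KL y x = (\<Sum>a\<in>UNIV. phi (x a) (y a))"
  by (simp add: KL_def phi_def)

lemma tangent_strict:
  assumes "0 \<le> y" "0 < z" "0 < X" "y \<noteq> z"
  shows "phi X y - phi X z > (1 + ln (z/X)) * (y - z)"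
proof (cases "y = 0")
  case True
  then show ?thesis using assms by (simp add: phi_def algebra_simps)
next
  case False
  then have y: "y > 0" using assms by simp
  have l: "ln (y/z) > 1 - z/y"
  proof -
    have "ln (z/y) < z/y - 1" using ln_strict[of "z/y"] y assms by (auto simp: field_simps)
    moreover have "ln (z/y) = - ln (y/z)" using y assms by (simp add: ln_div)
    ultimately show ?thesis by simp
  qed
  have "y * ln (y/z) > y * (1 - z/y)" using l y by simp
  moreover have "y * (1 - z/y) = y - z" using y by (simp add: field_simps)
  ultimately have "y * ln (y/z) > y - z" by linarith
  moreover have "phi X y - phi X z - (1 + ln (z/X)) * (y - z) = y * ln (y/z) - (y - z)"
    using y assms by (simp add: phi_def ln_div algebra_simps)
  ultimately show ?thesis by simp
qed

lemma tangent:
  assumes "0 \<le> y" "0 < z" "0 < X"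
  shows "phi X y - phi X z \<ge> (1 + ln (z/X)) * (y - z)"
  using tangent_strict[OF assms] by (cases "y = z") auto

definition Mset :: "('a \<Rightarrow> 'a::finite \<Rightarrow> real) \<Rightarrow> ('a \<Rightarrow> real) set" where
  "Mset P = {x \<in> prob_simplex. \<forall>b. mat_vec P x b = 0}"

definition Wset :: "('a \<Rightarrow> 'a::finite \<Rightarrow> real) \<Rightarrow> 'a set \<Rightarrow> ('a \<Rightarrow> real) set" where
  "Wset P Z = {w. (\<Sum>a\<in>UNIV. w a) = 0 \<and> (\<forall>b. mat_vec P w b = 0) \<and> (\<forall>a\<in>Z. w a = 0)}"

lemma Mset_nonneg: "x \<in> Mset P \<Longrightarrow> 0 \<le> x a"
  by (simp add: Mset_def prob_simplex_def)

lemma no_conformal: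
  fixes P :: "'a::finite \<Rightarrow> 'a \<Rightarrow> real"
  assumes pM: "p \<in> Mset P" and xpos: "\<forall>a. x a > 0"
    and opt: "\<forall>\<nu>\<in>Mset P. KL p x \<le> KL \<nu> x"
    and cW: "c \<in> Wset P {}" and cnz: "\<exists>b. c b \<noteq> 0"
    and conf: "\<forall>b. c b \<noteq> 0 \<longrightarrow> c b * (p b - x b) > 0"
  shows False
proof -
  define B where "B = {b. c b \<noteq> 0}"
  have Bne: "B \<noteq> {}" using cnz by (auto simp: B_def)
  have fB: "finite B" by simp
  define t where "t = Min ((\<lambda>b. \<bar>p b - x b\<bar> / \<bar>c b\<bar>) ` B)"
  have dne: "p b - x b \<noteq> 0" if "b \<in> B" for b
    using conf that by (auto simp: B_def)
  have tpos: "t > 0"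
    unfolding t_def using Bne dne by (subst Min_gr_iff) (auto simp: B_def)
  have tle: "t * \<bar>c b\<bar> \<le> \<bar>p b - x b\<bar>" if "b \<in> B" for b
  proof -
    have "t \<le> \<bar>p b - x b\<bar> / \<bar>c b\<bar>" unfolding t_def using that by (intro Min_le) auto
    then show ?thesis using that by (auto simp: B_def field_simps)
  qed
  define z where "z = (\<lambda>b. p b - t * c b)"
  have p0: "\<And>b. 0 \<le> p b" using pM by (rule Mset_nonneg)
  have cpos: "c b > 0 \<Longrightarrow> p b - x b > 0" for b
    using conf by (metis less_irrefl zero_less_mult_pos)
  have cneg: "c b < 0 \<Longrightarrow> p b - x b < 0" for b
    using conf[rule_format, of b] by (auto simp: zero_less_mult_iff)
  have zge: "c b > 0 \<Longrightarrow> z b \<ge> x b" for b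
    using tle[of b] cpos[of b] by (auto simp: B_def z_def)
  have zle: "c b < 0 \<Longrightarrow> z b \<le> x b" for b
    using tle[of b] cneg[of b] by (auto simp: B_def z_def)
  have zpos: "c b \<noteq> 0 \<Longrightarrow> z b > 0" for b
  proof -
    assume "c b \<noteq> 0"
    then consider "c b > 0" | "c b < 0" by linarith
    then show ?thesis
    proof cases
      case 1 then show ?thesis using zge[of b] xpos by (metis less_le_trans)
    next
      case 2 then have "t * c b < 0" using tpos by (simp add: mult_pos_neg)
      then show ?thesis using p0[of b] by (simp add: z_def)
    qed
  qed
  have z0: "0 \<le> z b" for b
    using zpos[of b] p0[of b] by (cases "c b = 0") (auto simp: z_def)
  have cs: "(\<Sum>b\<in>UNIV. c b) = 0" and cP: "\<And>b. mat_vec P c b = 0"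
    using cW by (auto simp: Wset_def)
  have zM: "z \<in> Mset P"
  proof -
    have "(\<Sum>b\<in>UNIV. z b) = (\<Sum>b\<in>UNIV. p b) - t * (\<Sum>b\<in>UNIV. c b)"
      by (simp add: z_def sum_subtractf sum_distrib_left)
    also have "\<dots> = 1" using pM cs by (simp add: Mset_def prob_simplex_def)
    finally have s1: "(\<Sum>b\<in>UNIV. z b) = 1" .
    have "mat_vec P z b = 0" for b
      unfolding z_def using mv_diff[of P p "\<lambda>b. t * c b" b] mv_scale[of P t c b] cP pM
      by (simp add: Mset_def)
    then show ?thesis using s1 z0 by (simp add: Mset_def prob_simplex_def)
  qed
  have each: "phi (x b) (p b) - phi (x b) (z b) \<ge> t * c b" for b
  proof (cases "c b = 0")
    case True then show ?thesis by (simp add: z_def)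
  next
    case False
    have "phi (x b) (p b) - phi (x b) (z b) > (1 + ln (z b / x b)) * (p b - z b)"
      using tangent_strict[of "p b" "z b" "x b"] p0 zpos[OF False] xpos False tpos
      by (simp add: z_def)
    moreover have "ln (z b / x b) * (p b - z b) \<ge> 0"
    proof (cases "c b > 0")
      case True
      then have "ln (z b / x b) \<ge> 0" using zge[OF True] xpos by simp
      moreover have "p b - z b \<ge> 0" using True tpos by (simp add: z_def)
      ultimately show ?thesis by simp
    next
      case False
      then have cn: "c b < 0" using \<open>c b \<noteq> 0\<close> by simp
      then have "ln (z b / x b) \<le> 0" using zle[OF cn] xpos zpos[of b] by simp
      moreover have "p b - z b \<le> 0" using cn tpos by (simp add: z_def mult_pos_neg less_imp_le)
      ultimately show ?thesis by (simp add: mult_nonpos_nonpos)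
    qed
    ultimately show ?thesis by (simp add: z_def algebra_simps)
  qed
  have eachs: "phi (x b) (p b) - phi (x b) (z b) > t * c b" if "c b \<noteq> 0" for b
  proof -
    have "phi (x b) (p b) - phi (x b) (z b) > (1 + ln (z b / x b)) * (p b - z b)"
      using tangent_strict[of "p b" "z b" "x b"] p0 zpos[OF that] xpos that tpos
      by (simp add: z_def)
    moreover have "ln (z b / x b) * (p b - z b) \<ge> 0"
    proof (cases "c b > 0")
      case True
      then have "ln (z b / x b) \<ge> 0" using zge[OF True] xpos by simp
      moreover have "p b - z b \<ge> 0" using True tpos by (simp add: z_def)
      ultimately show ?thesis by simp
    next
      case False
      then have cn: "c b < 0" using that by simp
      then have "ln (z b / x b) \<le> 0" using zle[OF cn] xpos zpos[of b] by simp
      moreover have "p b - z b \<le> 0" using cn tpos by (simp add: z_def mult_pos_neg less_imp_le)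
      ultimately show ?thesis by (simp add: mult_nonpos_nonpos)
    qed
    ultimately show ?thesis by (simp add: z_def algebra_simps)
  qed
  obtain b0 where b0: "c b0 \<noteq> 0" using Bne by (auto simp: B_def)
  have "(\<Sum>b\<in>UNIV. t * c b) < (\<Sum>b\<in>UNIV. phi (x b) (p b) - phi (x b) (z b))"
    by (rule sum_strict_mono_ex1) (use each eachs b0 in auto)
  moreover have "(\<Sum>b\<in>UNIV. t * c b) = 0" using cs by (simp add: sum_distrib_left[symmetric])
  ultimately have "KL z x < KL p x" by (simp add: KL_phi sum_subtractf)
  then show False using opt zM by force
qed

lemma unique_min:
  fixes P :: "'a::finite \<Rightarrow> 'a \<Rightarrow> real"
  assumes m1: "\<mu>1 \<in> Mset P" and m2: "\<mu>2 \<in> Mset P" and xpos: "\<forall>a. x a > 0"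
    and o1: "\<forall>\<nu>\<in>Mset P. KL \<mu>1 x \<le> KL \<nu> x"
    and o2: "\<forall>\<nu>\<in>Mset P. KL \<mu>2 x \<le> KL \<nu> x"
  shows "\<mu>1 = \<mu>2"
proof (rule ccontr)
  assume ne: "\<mu>1 \<noteq> \<mu>2"
  define m where "m = (\<lambda>b. (\<mu>1 b + \<mu>2 b) / 2)"
  have n1: "\<And>b. 0 \<le> \<mu>1 b" using m1 by (rule Mset_nonneg)
  have n2: "\<And>b. 0 \<le> \<mu>2 b" using m2 by (rule Mset_nonneg)
  have mM: "m \<in> Mset P"
  proof -
    have "(\<Sum>b\<in>UNIV. m b) = ((\<Sum>b\<in>UNIV. \<mu>1 b) + (\<Sum>b\<in>UNIV. \<mu>2 b)) / 2"
      by (simp add: m_def sum_divide_distrib[symmetric] sum.distrib)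
    also have "\<dots> = 1" using m1 m2 by (simp add: Mset_def prob_simplex_def)
    finally have s1: "(\<Sum>b\<in>UNIV. m b) = 1" .
    have "mat_vec P m b = 0" for b
      unfolding m_def using mv_div[of P "\<lambda>b. \<mu>1 b + \<mu>2 b" 2 b] mv_add[of P \<mu>1 \<mu>2 b] m1 m2
      by (simp add: Mset_def)
    moreover have "0 \<le> m b" for b using n1[of b] n2[of b] by (simp add: m_def)
    ultimately show ?thesis using s1 by (simp add: Mset_def prob_simplex_def)
  qed
  have strict: "phi (x b) (\<mu>1 b) + phi (x b) (\<mu>2 b) - 2 * phi (x b) (m b) > 0"
    if "\<mu>1 b \<noteq> \<mu>2 b" for b
  proof -
    have mp: "m b > 0" using n1[of b] n2[of b] that by (simp add: m_def)
    have "phi (x b) (\<mu>1 b) - phi (x b) (m b) > (1 + ln (m b / x b)) * (\<mu>1 b - m b)"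
      using tangent_strict[of "\<mu>1 b" "m b" "x b"] n1 mp xpos that by (auto simp: m_def)
    moreover have "phi (x b) (\<mu>2 b) - phi (x b) (m b) > (1 + ln (m b / x b)) * (\<mu>2 b - m b)"
      using tangent_strict[of "\<mu>2 b" "m b" "x b"] n2 mp xpos that by (auto simp: m_def)
    moreover have "(1 + ln (m b / x b)) * (\<mu>1 b - m b) + (1 + ln (m b / x b)) * (\<mu>2 b - m b) = 0"
      by (simp add: m_def algebra_simps)
    ultimately show ?thesis by linarith
  qed
  have each: "phi (x b) (\<mu>1 b) + phi (x b) (\<mu>2 b) - 2 * phi (x b) (m b) \<ge> 0" for b
    using strict[of b] by (cases "\<mu>1 b = \<mu>2 b") (auto simp: m_def)
  obtain b0 where b0: "\<mu>1 b0 \<noteq> \<mu>2 b0" using ne by (auto simp: fun_eq_iff)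
  have "0 < (\<Sum>b\<in>UNIV. phi (x b) (\<mu>1 b) + phi (x b) (\<mu>2 b) - 2 * phi (x b) (m b))"
    by (rule sum_pos2[of UNIV b0]) (use each strict b0 in auto)
  then have "KL \<mu>1 x + KL \<mu>2 x > 2 * KL m x"
    by (simp add: KL_phi sum_subtractf sum.distrib sum_distrib_left)
  moreover have "KL \<mu>1 x \<le> KL m x" "KL \<mu>2 x \<le> KL m x" using o1 o2 mM by auto
  ultimately show False by linarith
qed

definition NC :: "('a \<Rightarrow> real) set \<Rightarrow> ('a \<Rightarrow> real) \<Rightarrow> bool" where
  "NC V s \<longleftrightarrow> \<not> (\<exists>c\<in>V. (\<exists>b. c b \<noteq> 0) \<and> (\<forall>b. c b \<noteq> 0 \<longrightarrow> c b * s b > 0))"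

lemma Wset_mono: "Z \<subseteq> Z' \<Longrightarrow> Wset P Z' \<subseteq> Wset P Z"
  by (auto simp: Wset_def)

lemma NC_mono: "V \<subseteq> V' \<Longrightarrow> NC V' s \<Longrightarrow> NC V s"
  by (auto simp: NC_def)

lemma pos_prod_aux:
  fixes d e :: real
  assumes "d \<noteq> 0" "\<bar>e\<bar> < \<bar>d\<bar>"
  shows "d * (d - e) > 0"
proof -
  have "d * e \<le> \<bar>d\<bar> * \<bar>e\<bar>" by (metis abs_ge_self abs_mult)
  moreover have "d * d = \<bar>d\<bar> * \<bar>d\<bar>" by (simp add: abs_mult_self_eq)
  moreover have "\<bar>d\<bar> * (\<bar>d\<bar> - \<bar>e\<bar>) > 0" using assms by simp
  ultimately show ?thesis by (simp add: algebra_simps)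
qed

lemma sign_lemma:
  fixes P :: "'a::finite \<Rightarrow> 'a \<Rightarrow> real"
  shows "\<exists>C\<ge>0. \<forall>d e. d \<in> Wset P Z \<longrightarrow> NC (Wset P Z) (\<lambda>b. d b - e b) \<longrightarrow>
           norm_one d \<le> C * norm_one e"
proof (induction "card (UNIV - Z)" arbitrary: Z rule: less_induct)
  case less
  define A where "A = {a. a \<notin> Z \<and> (\<exists>w\<in>Wset P Z. w a \<noteq> 0)}"
  have ex: "\<exists>w. w \<in> Wset P Z \<and> w a = 1 \<and> (\<exists>C\<ge>0. \<forall>d e. d \<in> Wset P (insert a Z) \<longrightarrow>
      NC (Wset P (insert a Z)) (\<lambda>b. d b - e b) \<longrightarrow> norm_one d \<le> C * norm_one e)"
    if aA: "a \<in> A" for a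
  proof -
    from aA obtain w0 where w0: "w0 \<in> Wset P Z" "w0 a \<noteq> 0" and aZ: "a \<notin> Z" by (auto simp: A_def)
    define w where "w = (\<lambda>b. w0 b / w0 a)"
    have "w \<in> Wset P Z"
      using w0 by (auto simp: Wset_def w_def mv_div sum_divide_distrib[symmetric])
    moreover have "w a = 1" using w0 by (simp add: w_def)
    moreover have "card (UNIV - insert a Z) < card (UNIV - Z)"
      by (rule psubset_card_mono) (use aZ in auto)
    ultimately show ?thesis using less by blast
  qed
  then obtain wf where wf: "\<And>a. a \<in> A \<Longrightarrow> wf a \<in> Wset P Z \<and> wf a a = 1 \<and> (\<exists>C\<ge>0. \<forall>d e. d \<in> Wset P (insert a Z) \<longrightarrow>
      NC (Wset P (insert a Z)) (\<lambda>b. d b - e b) \<longrightarrow> norm_one d \<le> C * norm_one e)"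
    by metis
  then obtain Cf where Cf: "\<And>a. a \<in> A \<Longrightarrow> Cf a \<ge> 0 \<and> (\<forall>d e. d \<in> Wset P (insert a Z) \<longrightarrow>
      NC (Wset P (insert a Z)) (\<lambda>b. d b - e b) \<longrightarrow> norm_one d \<le> Cf a * norm_one e)"
    by metis
  define C where "C = (\<Sum>a\<in>A. Cf a * (1 + norm_one (wf a)) + norm_one (wf a))"
  have term_nn: "0 \<le> Cf a * (1 + norm_one (wf a)) + norm_one (wf a)" if "a \<in> A" for a
    using Cf[OF that] no_nonneg[of "wf a"] by simp
  have C0: "C \<ge> 0" unfolding C_def by (rule sum_nonneg) (use term_nn in auto)
  show ?case
  proof (intro exI[of _ C] conjI allI impI C0)
    fix d e :: "'a \<Rightarrow> real"
    assume dW: "d \<in> Wset P Z" and nc: "NC (Wset P Z) (\<lambda>b. d b - e b)"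
    show "norm_one d \<le> C * norm_one e"
    proof (cases "\<forall>b. d b = 0")
      case True
      then have "norm_one d = 0" by (simp add: norm_one_def)
      then show ?thesis using C0 no_nonneg[of e] by simp
    next
      case False
      have "\<exists>a. d a \<noteq> 0 \<and> \<bar>d a\<bar> \<le> \<bar>e a\<bar>"
      proof (rule ccontr)
        assume "\<not> ?thesis"
        then have "\<forall>b. d b \<noteq> 0 \<longrightarrow> d b * (d b - e b) > 0"
          using pos_prod_aux by (metis not_le)
        then show False using nc dW False unfolding NC_def by blast
      qed
      then obtain a where da: "d a \<noteq> 0" "\<bar>d a\<bar> \<le> \<bar>e a\<bar>" by blast
      have aZ: "a \<notin> Z" using dW da by (auto simp: Wset_def)
      have aA: "a \<in> A" using aZ dW da by (auto simp: A_def)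
      note w = wf[OF aA]
      define d' where "d' = (\<lambda>b. d b - d a * wf a b)"
      define e' where "e' = (\<lambda>b. e b - d a * wf a b)"
      have d'W: "d' \<in> Wset P (insert a Z)"
      proof -
        have "(\<Sum>b\<in>UNIV. d' b) = (\<Sum>b\<in>UNIV. d b) - d a * (\<Sum>b\<in>UNIV. wf a b)"
          by (simp add: d'_def sum_subtractf sum_distrib_left)
        also have "\<dots> = 0" using dW w by (simp add: Wset_def)
        finally have s: "(\<Sum>b\<in>UNIV. d' b) = 0" .
        have m: "mat_vec P d' b = 0" for b
          unfolding d'_def using mv_diff[of P d "\<lambda>b. d a * wf a b" b] mv_scale[of P "d a" "wf a" b] dW w
          by (simp add: Wset_def)
        have z: "\<forall>b\<in>insert a Z. d' b = 0" using dW w by (auto simp: Wset_def d'_def)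
        show ?thesis using s m z by (simp add: Wset_def)
      qed
      have nc': "NC (Wset P (insert a Z)) (\<lambda>b. d' b - e' b)"
      proof -
        have "(\<lambda>b. d' b - e' b) = (\<lambda>b. d b - e b)" by (simp add: d'_def e'_def fun_eq_iff)
        then show ?thesis using NC_mono[OF Wset_mono[of Z "insert a Z" P] nc] by auto
      qed
      define nw where "nw = norm_one (wf a)"
      define ne where "ne = norm_one e"
      have nw0: "nw \<ge> 0" and ne0: "ne \<ge> 0" using no_nonneg by (auto simp: nw_def ne_def)
      have dale: "\<bar>d a\<bar> \<le> ne" using da(2) comp_le_no[of e a] by (simp add: ne_def)
      have r: "norm_one (\<lambda>b. d a * wf a b) = \<bar>d a\<bar> * nw" by (simp add: no_scale nw_def)
      have rle: "\<bar>d a\<bar> * nw \<le> ne * nw" using dale nw0 by (rule mult_right_mono)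
      have e'le: "norm_one e' \<le> ne * (1 + nw)"
        using no_diff[of e "\<lambda>b. d a * wf a b"] r rle unfolding e'_def ne_def
        by (simp add: algebra_simps)
      have d'le: "norm_one d' \<le> Cf a * norm_one e'" using Cf[OF aA] d'W nc' by blast
      also have "\<dots> \<le> Cf a * (ne * (1 + nw))" using Cf[OF aA] e'le by (simp add: mult_left_mono)
      finally have d'le2: "norm_one d' \<le> Cf a * (ne * (1 + nw))" .
      have "d = (\<lambda>b. d' b + d a * wf a b)" by (simp add: d'_def fun_eq_iff)
      then have "norm_one d \<le> norm_one d' + \<bar>d a\<bar> * nw" using no_add[of d' "\<lambda>b. d a * wf a b"] r by simp
      also have "\<dots> \<le> ne * (Cf a * (1 + nw) + nw)" using d'le2 rle by (simp add: algebra_simps)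
      also have "\<dots> \<le> ne * C"
      proof (rule mult_left_mono[OF _ ne0])
        show "Cf a * (1 + nw) + nw \<le> C" unfolding C_def nw_def
          by (rule member_le_sum[of a A "\<lambda>a. Cf a * (1 + norm_one (wf a)) + norm_one (wf a)"]) (use aA term_nn in auto)
      qed
      finally show ?thesis by (simp add: ne_def mult.commute)
    qed
  qed
qed

definition Fv :: "('a \<Rightarrow> 'a::finite \<Rightarrow> real) \<Rightarrow> real^'a \<Rightarrow> real^'a" where
  "Fv P v = (\<chi> a. \<Sum>b\<in>UNIV. P a b * v $ b)"

lemma Fv_linear: "linear (Fv P)"
  by (rule linearI) (auto simp: Fv_def vec_eq_iff sum.distrib sum_distrib_left algebra_simps)

lemma Fv_nth: "Fv P (vec_lambda s) $ a = mat_vec P s a"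
  by (simp add: Fv_def mat_vec_def)

lemma LB:
  fixes P :: "'a::finite \<Rightarrow> 'a \<Rightarrow> real"
  shows "\<exists>C\<ge>0. \<forall>s. \<exists>y. (\<forall>b. mat_vec P y b = mat_vec P s b) \<and> norm_one y \<le> C * norm_inf (mat_vec P s)"
proof -
  define N where "N = {v. Fv P v = 0}"
  define U where "U = {z. \<forall>w\<in>N. orthogonal w z}"
  have lin: "linear (Fv P)" by (rule Fv_linear)
  have bl: "bounded_linear (Fv P)" using lin linear_conv_bounded_linear by blast
  have sN: "subspace N" unfolding N_def using linear_subspace_kernel[OF lin] by simp
  have sU: "subspace U" unfolding U_def by (rule subspace_orthogonal_to_vectors)
  have cU: "closed U" using sU by (rule closed_subspace)
  have inj: "\<forall>z\<in>U. Fv P z = 0 \<longrightarrow> z = 0"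
    by (auto simp: U_def N_def orthogonal_self)
  obtain e where e: "e > 0" "\<forall>z\<in>U. norm (Fv P z) \<ge> e * norm z"
    using injective_imp_isometric[OF cU sU bl inj] by blast
  define n where "n = real CARD('a)"
  have n0: "n \<ge> 0" by (simp add: n_def)
  show ?thesis
  proof (intro exI[of _ "n * n / e"] conjI allI)
    show "0 \<le> n * n / e" using n0 e by simp
    fix s :: "'a \<Rightarrow> real"
    obtain y z where yz: "y \<in> span N" "\<And>w. w \<in> span N \<Longrightarrow> orthogonal z w" "vec_lambda s = y + z"
      using orthogonal_subspace_decomp_exists[of N "vec_lambda s"] by metis
    have yN: "y \<in> N" using yz(1) sN by (metis span_eq_iff)
    have zU: "z \<in> U" using yz(2) sN span_superset[of N] by (auto simp: U_def orthogonal_commute)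
    have Fz: "Fv P z = Fv P (vec_lambda s)"
      using yz(3) yN linear_add[OF lin, of y z] by (simp add: N_def)
    define yy where "yy = (\<lambda>b. z $ b)"
    have "vec_lambda yy = z" by (simp add: yy_def vec_nth_inverse)
    then have m: "mat_vec P yy b = mat_vec P s b" for b
      using Fz Fv_nth[of P yy b] Fv_nth[of P s b] by simp
    have "norm_one yy \<le> n * norm z"
      unfolding norm_one_def yy_def n_def
      using sum_mono[of UNIV "\<lambda>b. \<bar>z $ b\<bar>" "\<lambda>_. norm z"] component_le_norm_cart by auto
    moreover have "e * norm z \<le> norm (Fv P (vec_lambda s))" using e zU Fz by metis
    moreover have "norm (Fv P (vec_lambda s)) \<le> n * norm_inf (mat_vec P s)"
    proof -
      have "norm (Fv P (vec_lambda s)) \<le> (\<Sum>a\<in>UNIV. \<bar>Fv P (vec_lambda s) $ a\<bar>)" by (rule norm_le_l1_cart)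
      also have "\<dots> = norm_one (mat_vec P s)" by (simp add: Fv_nth norm_one_def)
      also have "\<dots> \<le> n * norm_inf (mat_vec P s)" unfolding n_def by (rule no_le_ni)
      finally show ?thesis .
    qed
    ultimately have "norm_one yy \<le> n * (n * norm_inf (mat_vec P s) / e)"
    proof -
      assume a1: "norm_one yy \<le> n * norm z" and a2: "e * norm z \<le> norm (Fv P (vec_lambda s))"
        and a3: "norm (Fv P (vec_lambda s)) \<le> n * norm_inf (mat_vec P s)"
      have "norm z \<le> n * norm_inf (mat_vec P s) / e"
        using a2 a3 e(1) by (simp add: pos_le_divide_eq mult.commute)
      then have "n * norm z \<le> n * (n * norm_inf (mat_vec P s) / e)" using n0 by (rule mult_left_mono)
      then show ?thesis using a1 by linarith
    qed
    then show "\<exists>y. (\<forall>b. mat_vec P y b = mat_vec P s b) \<and> norm_one y \<le> n * n / e * norm_inf (mat_vec P s)"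
      using m by (intro exI[of _ yy]) (simp add: algebra_simps)
  qed
qed

lemma phi_eq: "phi X = (\<lambda>t. t * ln (t / X))"
  by (auto simp: phi_def fun_eq_iff)

lemma phi_cont:
  assumes X: "X > 0"
  shows "continuous_on {0..} (phi X)"
  unfolding phi_eq continuous_on_eq_continuous_within
proof
  fix t :: real assume "t \<in> {0..}"
  then consider "t > 0" | "t = 0" by force
  then show "continuous (at t within {0..}) (\<lambda>t. t * ln (t / X))"
  proof cases
    case 1
    have "isCont (\<lambda>t. t * ln (t / X)) t" using 1 X by (auto intro!: continuous_intros)
    then show ?thesis by (rule continuous_at_imp_continuous_at_within)
  next
    case 2
    have l1: "((\<lambda>t::real. t * ln t) \<longlongrightarrow> 0) (at_right 0)" by real_asymp
    have l2: "((\<lambda>t::real. t * ln X) \<longlongrightarrow> 0 * ln X) (at_right 0)"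
      by (intro tendsto_intros)
    have "((\<lambda>t::real. t * ln t - t * ln X) \<longlongrightarrow> 0 - 0 * ln X) (at_right 0)"
      by (rule tendsto_diff[OF l1 l2])
    then have l3: "((\<lambda>t::real. t * ln t - t * ln X) \<longlongrightarrow> 0) (at_right 0)" by simp
    have ev: "eventually (\<lambda>t. t * ln t - t * ln X = t * ln (t / X)) (at_right (0::real))"
      using X by (auto simp: eventually_at_right_less ln_div algebra_simps intro!: eventually_mono[OF eventually_at_right_less])
    have "((\<lambda>t::real. t * ln (t / X)) \<longlongrightarrow> 0) (at_right 0)"
      using tendsto_cong[OF ev] l3 by simp
    then show ?thesis using 2 by (simp add: continuous_within at_within_Ici_at_right)
  qed
qed

lemma Mset_char: "Mset P = {x \<in> prob_simplex. \<forall>b. mat_vec P x b = 0}"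
  by (simp add: Mset_def)

lemma mv_vec: "mat_vec P (\<lambda>a. v $ a) b = Fv P v $ b"
  by (simp add: Fv_def mat_vec_def)

lemma exists_min:
  fixes P :: "'a::finite \<Rightarrow> 'a \<Rightarrow> real"
  assumes sk: "skew_symmetric P" and fs: "full_support P" and xpos: "\<forall>a. x a > 0"
  shows "\<exists>p\<in>Mset P. \<forall>\<nu>\<in>Mset P. KL p x \<le> KL \<nu> x"
proof -
  define S where "S = {v :: real^'a. (\<forall>a. 0 \<le> v $ a) \<and> (\<Sum>a\<in>UNIV. v $ a) = 1 \<and> (\<forall>b. Fv P v $ b = 0)}"
  have S_iff: "v \<in> S \<longleftrightarrow> (\<lambda>a. v $ a) \<in> Mset P" for v
    by (simp add: S_def Mset_def prob_simplex_def mv_vec)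
  have bl: "bounded_linear (Fv P)" using Fv_linear linear_conv_bounded_linear by blast
  have cF: "continuous_on UNIV (Fv P)" using bl by (rule linear_continuous_on)
  have closed: "closed S"
    unfolding S_def
    by (intro closed_Collect_conj closed_Collect_all closed_Collect_le closed_Collect_eq
        continuous_on_component continuous_on_sum continuous_on_const continuous_on_id cF)
  have bounded: "bounded S"
    unfolding bounded_iff
  proof (intro exI[of _ 1] ballI)
    fix v assume "v \<in> S"
    then have "(\<Sum>a\<in>UNIV. \<bar>v $ a\<bar>) = 1" by (simp add: S_def)
    then show "norm v \<le> 1" using norm_le_l1_cart[of v] by simp
  qed
  have compact: "compact S" using closed bounded by (simp add: compact_eq_bounded_closed)
  obtain \<pi> where pn: "\<pi> \<in> nash_set P" using fs_witness[OF fs] by blast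
  then have "\<pi> \<in> Mset P" using nash_char[OF sk fs] by (simp add: Mset_def)
  then have "vec_lambda \<pi> \<in> S" by (simp add: S_iff)
  then have ne: "S \<noteq> {}" by blast
  define f where "f = (\<lambda>v::real^'a. \<Sum>a\<in>UNIV. phi (x a) (v $ a))"
  have cont: "continuous_on S f"
    unfolding f_def
  proof (intro continuous_on_sum)
    fix a :: 'a
    show "continuous_on S (\<lambda>v. phi (x a) (v $ a))"
    proof (rule continuous_on_compose2[OF phi_cont[of "x a"]])
      show "0 < x a" using xpos by simp
      show "continuous_on S (\<lambda>v. v $ a)" by (intro continuous_on_component continuous_on_id)
      show "(\<lambda>v. v $ a) ` S \<subseteq> {0..}" by (auto simp: S_def)
    qed
  qed
  obtain v0 where v0: "v0 \<in> S" "\<forall>v\<in>S. f v0 \<le> f v"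
    using continuous_attains_inf[OF compact ne cont] by blast
  have fK: "f v = KL (\<lambda>a. v $ a) x" for v by (simp add: f_def KL_phi)
  show ?thesis
  proof (intro bexI[of _ "\<lambda>a. v0 $ a"] ballI)
    show "(\<lambda>a. v0 $ a) \<in> Mset P" using v0(1) S_iff by blast
    fix \<nu> assume "\<nu> \<in> Mset P"
    then have "vec_lambda \<nu> \<in> S" by (simp add: S_iff)
    then have "f v0 \<le> f (vec_lambda \<nu>)" using v0(2) by blast
    then show "KL (\<lambda>a. v0 $ a) x \<le> KL \<nu> x" by (simp add: fK)
  qed
qed

lemma klp:
  fixes P :: "'a::finite \<Rightarrow> 'a \<Rightarrow> real"
  assumes sk: "skew_symmetric P" and fs: "full_support P" and xpos: "\<forall>a. x a > 0"
  shows "kl_proj P x \<in> Mset P \<and> (\<forall>\<nu>\<in>Mset P. KL (kl_proj P x) x \<le> KL \<nu> x)"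
proof -
  have eq: "nash_set P = Mset P" using nash_char[OF sk fs] by (simp add: Mset_def)
  have "\<exists>!\<mu>. \<mu> \<in> Mset P \<and> (\<forall>\<nu>\<in>Mset P. KL \<mu> x \<le> KL \<nu> x)"
    using exists_min[OF sk fs xpos] unique_min[OF _ _ xpos] by blast
  then show ?thesis unfolding kl_proj_def eq by (rule theI')
qed

lemma hoffman:
  fixes P :: "'a::finite \<Rightarrow> 'a \<Rightarrow> real"
  assumes sk: "skew_symmetric P" and fs: "full_support P"
  shows "\<exists>C\<ge>0. \<forall>x\<in>prob_simplex. \<exists>q\<in>Mset P. norm_one (\<lambda>a. x a - q a) \<le> C * norm_inf (mat_vec P x)"
proof -
  obtain \<pi> where pn: "\<pi> \<in> nash_set P" and pp: "\<And>a. \<pi> a > 0" using fs_witness[OF fs] by blast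
  have pM: "\<pi> \<in> Mset P" using pn nash_char[OF sk fs] by (simp add: Mset_def)
  define m where "m = Min (range \<pi>)"
  have m0: "m > 0" unfolding m_def using pp by (subst Min_gr_iff) auto
  have mle: "m \<le> \<pi> a" for a unfolding m_def by (rule Min_le) auto
  obtain C3 where C3: "C3 \<ge> 0" "\<And>s. \<exists>y. (\<forall>b. mat_vec P y b = mat_vec P s b) \<and> norm_one y \<le> C3 * norm_inf (mat_vec P s)"
    using LB[of P] by blast
  define C where "C = 2 * (1 + 1/m) * C3"
  show ?thesis
  proof (intro exI[of _ C] conjI ballI)
    show "0 \<le> C" using m0 C3 by (simp add: C_def)
    fix x :: "'a \<Rightarrow> real" assume xS: "x \<in> prob_simplex"
    have x0: "\<And>b. 0 \<le> x b" and x1: "(\<Sum>b\<in>UNIV. x b) = 1" using xS by (auto simp: prob_simplex_def)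
    define \<delta> where "\<delta> = norm_inf (mat_vec P x)"
    obtain y where y: "\<And>b. mat_vec P y b = mat_vec P x b" "norm_one y \<le> C3 * \<delta>"
      using C3(2)[of x] unfolding \<delta>_def by blast
    define \<sigma> where "\<sigma> = norm_one y / m"
    have \<sigma>0: "\<sigma> \<ge> 0" using m0 no_nonneg[of y] by (simp add: \<sigma>_def)
    define r where "r = (\<lambda>b. x b - y b + \<sigma> * \<pi> b)"
    have rx: "r b - x b \<ge> 0" for b
    proof -
      have "\<sigma> * m \<le> \<sigma> * \<pi> b" using mle \<sigma>0 by (simp add: mult_left_mono)
      moreover have "\<sigma> * m = norm_one y" using m0 by (simp add: \<sigma>_def)
      moreover have "y b \<le> norm_one y" using comp_le_no[of y b] by simp
      ultimately show ?thesis by (simp add: r_def)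
    qed
    have r0: "0 \<le> r b" for b using rx[of b] x0[of b] by linarith
    define T where "T = (\<Sum>b\<in>UNIV. r b)"
    have T_eq: "T = 1 - (\<Sum>b\<in>UNIV. y b) + \<sigma>"
      using pM x1 by (simp add: T_def r_def sum.distrib sum_subtractf sum_distrib_left[symmetric] Mset_def prob_simplex_def)
    have sy: "- (\<Sum>b\<in>UNIV. y b) \<le> norm_one y"
      unfolding norm_one_def by (metis abs_ge_minus_self abs_sum_abs sum_abs order_trans minus_le_iff sum_negf)
    have T1: "T \<ge> 1"
    proof -
      have "T - 1 = (\<Sum>b\<in>UNIV. r b - x b)" using x1 by (simp add: T_def sum_subtractf)
      moreover have "(\<Sum>b\<in>UNIV. r b - x b) \<ge> 0" using rx by (simp add: sum_nonneg)
      ultimately show ?thesis by simp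
    qed
    define q where "q = (\<lambda>b. r b / T)"
    have qM: "q \<in> Mset P"
    proof -
      have "mat_vec P r b = 0" for b
        using pM y(1)[of b] unfolding r_def
        by (simp add: mv_add mv_diff mv_scale Mset_def)
      then have "mat_vec P q b = 0" for b by (simp add: q_def mv_div)
      moreover have "(\<Sum>b\<in>UNIV. q b) = 1" using T1 by (simp add: q_def T_def sum_divide_distrib[symmetric])
      moreover have "0 \<le> q b" for b using r0[of b] T1 by (simp add: q_def)
      ultimately show ?thesis by (simp add: Mset_def prob_simplex_def)
    qed
    have n1: "norm_one (\<lambda>b. x b - r b) = T - 1"
    proof -
      have "norm_one (\<lambda>b. x b - r b) = (\<Sum>b\<in>UNIV. r b - x b)"
        unfolding norm_one_def by (intro sum.cong refl) (metis abs_minus_commute abs_of_nonneg rx)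
      then show ?thesis using x1 by (simp add: T_def sum_subtractf)
    qed
    have n2: "norm_one (\<lambda>b. r b - q b) = T - 1"
    proof -
      have "norm_one (\<lambda>b. r b - q b) = (\<Sum>b\<in>UNIV. r b * (1 - 1/T))"
        unfolding norm_one_def q_def
      proof (intro sum.cong refl)
        fix b
        have "r b - r b / T = r b * (1 - 1/T)" by (simp add: algebra_simps)
        moreover have "1 - 1/T \<ge> 0" using T1 by simp
        ultimately show "\<bar>r b - r b / T\<bar> = r b * (1 - 1/T)" using r0[of b] by simp
      qed
      also have "\<dots> = T * (1 - 1/T)" by (simp add: T_def sum_distrib_right)
      also have "\<dots> = T - 1" using T1 by (simp add: algebra_simps)
      finally show ?thesis .
    qed
    have "norm_one (\<lambda>a. x a - q a) \<le> norm_one (\<lambda>b. x b - r b) + norm_one (\<lambda>b. r b - q b)"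
      using no_add[of "\<lambda>b. x b - r b" "\<lambda>b. r b - q b"] by simp
    also have "\<dots> = 2 * (T - 1)" using n1 n2 by simp
    also have "\<dots> \<le> 2 * (norm_one y * (1 + 1/m))"
    proof -
      have e1: "norm_one y * (1 + 1/m) = norm_one y + \<sigma>" by (simp add: \<sigma>_def algebra_simps)
      have "T - 1 \<le> norm_one y + \<sigma>" using T_eq sy by linarith
      then show ?thesis unfolding e1 by (intro mult_left_mono) simp_all
    qed
    also have "\<dots> \<le> 2 * (C3 * \<delta> * (1 + 1/m))"
      using y(2) m0 by (simp add: mult_right_mono)
    also have "\<dots> = C * \<delta>" by (simp add: C_def algebra_simps)
    finally show "\<exists>q\<in>Mset P. norm_one (\<lambda>a. x a - q a) \<le> C * norm_inf (mat_vec P x)"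
      using qM unfolding \<delta>_def by blast
  qed
qed

theorem mainTheorem7:
  fixes P :: "'a::finite \<Rightarrow> 'a \<Rightarrow> real"
  assumes "skew_symmetric P"
    and "full_support P"
  shows "\<exists>c>0. \<forall>x\<in>prob_simplex. (\<forall>a. x a > 0) \<longrightarrow>
        norm_inf (mat_vec P x) \<ge> c * norm_one (\<lambda>a. x a - kl_proj P x a)"
proof -
  note sk = assms(1) and fs = assms(2)
  obtain C1 where C1: "C1 \<ge> 0" "\<And>d e. d \<in> Wset P {} \<Longrightarrow> NC (Wset P {}) (\<lambda>b. d b - e b) \<Longrightarrow>
           norm_one d \<le> C1 * norm_one e"
    using sign_lemma[of P "{}"] by blast
  obtain C2 where C2: "C2 \<ge> 0" "\<And>x. x \<in> prob_simplex \<Longrightarrow> \<exists>q\<in>Mset P. norm_one (\<lambda>a. x a - q a) \<le> C2 * norm_inf (mat_vec P x)"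
    using hoffman[OF sk fs] by blast
  define K where "K = (C1 + 1) * C2"
  have K0: "K \<ge> 0" using C1 C2 by (simp add: K_def)
  show ?thesis
  proof (intro exI[of _ "1 / (K + 1)"] conjI ballI impI)
    show "0 < 1 / (K + 1)" using K0 by simp
    fix x :: "'a \<Rightarrow> real" assume xS: "x \<in> prob_simplex" and xpos: "\<forall>a. x a > 0"
    define p where "p = kl_proj P x"
    have pM: "p \<in> Mset P" and opt: "\<forall>\<nu>\<in>Mset P. KL p x \<le> KL \<nu> x"
      using klp[OF sk fs xpos] by (auto simp: p_def)
    obtain q where qM: "q \<in> Mset P" and qx: "norm_one (\<lambda>a. x a - q a) \<le> C2 * norm_inf (mat_vec P x)"
      using C2(2)[OF xS] by blast
    define d where "d = (\<lambda>b. p b - q b)"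
    define e where "e = (\<lambda>b. x b - q b)"
    have dW: "d \<in> Wset P {}"
    proof -
      have "(\<Sum>b\<in>UNIV. d b) = 0" using pM qM by (simp add: d_def sum_subtractf Mset_def prob_simplex_def)
      moreover have "mat_vec P d b = 0" for b using pM qM by (simp add: d_def mv_diff Mset_def)
      ultimately show ?thesis by (simp add: Wset_def)
    qed
    have nc: "NC (Wset P {}) (\<lambda>b. d b - e b)"
    proof -
      have "(\<lambda>b. d b - e b) = (\<lambda>b. p b - x b)" by (simp add: d_def e_def fun_eq_iff)
      moreover have "NC (Wset P {}) (\<lambda>b. p b - x b)"
        unfolding NC_def using no_conformal[OF pM xpos opt] by blast
      ultimately show ?thesis by simp
    qed
    have dle: "norm_one d \<le> C1 * norm_one e" using C1(2)[OF dW nc] .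
    define \<delta> where "\<delta> = norm_inf (mat_vec P x)"
    have \<delta>0: "\<delta> \<ge> 0" by (simp add: \<delta>_def ni_nonneg)
    have ele: "norm_one e \<le> C2 * \<delta>" using qx by (simp add: e_def \<delta>_def)
    have "norm_one (\<lambda>a. x a - p a) \<le> norm_one e + norm_one d"
    proof -
      have "(\<lambda>a. x a - p a) = (\<lambda>a. e a - d a)" by (simp add: d_def e_def fun_eq_iff)
      then show ?thesis using no_diff[of e d] by simp
    qed
    also have "\<dots> \<le> (C1 + 1) * norm_one e" using dle by (simp add: algebra_simps)
    also have "\<dots> \<le> (C1 + 1) * (C2 * \<delta>)" using ele C1(1) by (simp add: mult_left_mono)
    also have "\<dots> = K * \<delta>" by (simp add: K_def)
    finally have N: "norm_one (\<lambda>a. x a - p a) \<le> K * \<delta>" .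
    have "1 / (K + 1) * norm_one (\<lambda>a. x a - p a) \<le> 1 / (K + 1) * (K * \<delta>)"
      using N K0 by (simp add: divide_right_mono)
    also have "\<dots> \<le> \<delta>" using K0 \<delta>0 by (simp add: field_simps)
    finally show "norm_inf (mat_vec P x) \<ge> 1 / (K + 1) * norm_one (\<lambda>a. x a - kl_proj P x a)"
      by (simp add: p_def \<delta>_def)
  qed
qed

end
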